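(* Let $(X,\mathcal{O}(X))$ be a measurable space, $\mathcal{A}$ a unital $C^*$-algebra and $\mathcal{H}$ a Hilbert space. Let $\mathcal{I}:\mathcal{O}(X)\to CP(\mathcal{A},\mathcal{B}(\mathcal{H}))$ be a CP instrument with minimal bi-dilation $(\mathcal{K},\pi,E,V)$. Then a set $A\in\mathcal{O}(X)$ is an atom for $\mathcal{I}$ if and only if $A$ is an atom for the spectral instrument $\pi E$. In particular, $\mathcal{I}$ is atomic (resp. non-atomic) if and only if $\pi E$ is atomic (resp. non-atomic).
   Context: A CP instrument is a map $\mathcal{I}$ from $\mathcal{O}(X)$ to the completely positive maps $\mathcal{A}\to\mathcal{B}(\mathcal{H})$ such that for all $a\in\mathcal{A}$, $h,k\in\mathcal{H}$, $A\mapsto\langle h,\mathcal{I}(A)(a)k\rangle$ is a countably additive complex measure. A minimal bi-dilation is a quadruple $(\mathcal{K},\pi,E,V)$ with $\pi:\mathcal{A}\to\mathcal{B}(\mathcal{K})$ a unital $*$-homomorphism, $E:\mathcal{O}(X)\to\mathcal{B}(\mathcal{K})$ a spectral measure commuting with $\pi$, $V\in\mathcal{B}(\mathcal{H},\mathcal{K})$, with $\mathcal{I}(A)(a)=V^*\pi(a)E(A)V$ and $\overline{\mathrm{span}}\{\pi(a)E(A)Vh\}=\mathcal{K}$. $\pi E$ is the instrument $(\pi E)(A)(a)=\pi(a)E(A)$. For an instrument $\mathcal{J}$, a set $A\in\mathcal{O}(X)$ is an atom if $\mathcal{J}(A)\neq0$ and for every $B\subseteq A$ in $\mathcal{O}(X)$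 either $\mathcal{J}(B)=0$ or $\mathcal{J}(B)=\mathcal{J}(A)$. $\mathcal{J}$ is atomic if every $A$ with $\mathcal{J}(A)\neq0$ contains an atom, and non-atomic if it has no atom. *)

theory Defs
  imports "HOL-Analysis.Analysis"
begin

class cvec = ab_group_add +
  fixes cscale :: "complex \<Rightarrow> 'a \<Rightarrow> 'a" (infixr \<open>*\<^sub>C\<close> 75)
  assumes cscale_add_right: "c *\<^sub>C (x + y) = c *\<^sub>C x + c *\<^sub>C y"
    and cscale_add_left: "(b + c) *\<^sub>C x = b *\<^sub>C x + c *\<^sub>C x"
    and cscale_cscale: "b *\<^sub>C (c *\<^sub>C x) = (b * c) *\<^sub>C x"
    and cscale_one: "1 *\<^sub>C x = x"

class chilbert = cvec +
  fixes cinner :: "'a \<Rightarrow> 'a \<Rightarrow> complex"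
  assumes cinner_conj: "cinner x y = cnj (cinner y x)"
    and cinner_add_right: "cinner x (y + z) = cinner x y + cinner x z"
    and cinner_cscale_right: "cinner x (c *\<^sub>C y) = c * cinner x y"
    and cinner_nonneg: "0 \<le> Re (cinner x x)"
    and cinner_eq_zero: "cinner x x = 0 \<longleftrightarrow> x = 0"
    and chilbert_complete: "(\<forall>e>0. \<exists>N. \<forall>m\<ge>N. \<forall>n\<ge>N. sqrt (Re (cinner ((X::nat \<Rightarrow> 'a) m - X n) (X m - X n))) < e)
        \<Longrightarrow> (\<exists>L. \<forall>e>0. \<exists>N. \<forall>n\<ge>N. sqrt (Re (cinner (X n - L) (X n - L))) < e)"

class cstar_algebra = cvec + ring_1 +
  fixes cstar :: "'a \<Rightarrow> 'a"
    and anorm :: "'a \<Rightarrow> real"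
  assumes cscale_mult_left: "(c *\<^sub>C a) * b = c *\<^sub>C (a * b)"
    and cscale_mult_right: "a * (c *\<^sub>C b) = c *\<^sub>C (a * b)"
    and cstar_cstar: "cstar (cstar a) = a"
    and cstar_add: "cstar (a + b) = cstar a + cstar b"
    and cstar_cscale: "cstar (c *\<^sub>C a) = cnj c *\<^sub>C cstar a"
    and cstar_mult: "cstar (a * b) = cstar b * cstar a"
    and norm_nonneg_cstar: "0 \<le> anorm a"
    and norm_eq_zero_cstar: "anorm a = 0 \<longleftrightarrow> a = 0"
    and norm_triangle_cstar: "anorm (a + b) \<le> anorm a + anorm b"
    and norm_cscale_cstar: "anorm (c *\<^sub>C a) = cmod c * anorm a"
    and norm_mult_cstar: "anorm (a * b) \<le> anorm a * anorm b"
    and cstar_identity: "anorm (cstar a * a) = (anorm a)\<^sup>2"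
    and cstar_complete: "(\<forall>e>0. \<exists>N. \<forall>m\<ge>N. \<forall>n\<ge>N. anorm ((X::nat \<Rightarrow> 'a) m - X n) < e)
        \<Longrightarrow> (\<exists>L. \<forall>e>0. \<exists>N. \<forall>n\<ge>N. anorm (X n - L) < e)"

definition hnorm :: "'h::chilbert \<Rightarrow> real" where
  "hnorm x = sqrt (Re (cinner x x))"

definition clinear_map :: "('a::cvec \<Rightarrow> 'b::cvec) \<Rightarrow> bool" where
  "clinear_map T \<longleftrightarrow> (\<forall>x y. T (x + y) = T x + T y) \<and> (\<forall>c x. T (c *\<^sub>C x) = c *\<^sub>C T x)"

definition bounded_op :: "('h::chilbert \<Rightarrow> 'k::chilbert) \<Rightarrow> bool" where
  "bounded_op T \<longleftrightarrow> clinear_map T \<and> (\<exists>C. \<forall>x. hnorm (T x) \<le> C * hnorm x)"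

definition is_adjoint :: "('h::chilbert \<Rightarrow> 'k::chilbert) \<Rightarrow> ('k \<Rightarrow> 'h) \<Rightarrow> bool" where
  "is_adjoint T S \<longleftrightarrow> (\<forall>x y. cinner (S y) x = cinner y (T x))"

text \<open>Positive operator on \<open>H\<^sup>n\<close> given as an \<open>n\<times>n\<close> operator matrix \<open>T i j\<close>.\<close>
definition positive_opmatrix :: "nat \<Rightarrow> (nat \<Rightarrow> nat \<Rightarrow> 'h::chilbert \<Rightarrow> 'h) \<Rightarrow> bool" where
  "positive_opmatrix n T \<longleftrightarrow>
     (\<forall>h::nat \<Rightarrow> 'h. let s = (\<Sum>i<n. \<Sum>j<n. cinner (h i) (T i j (h j))) in Im s = 0 \<and> 0 \<le> Re s)"

definition positive_matrix :: "nat \<Rightarrow> (nat \<Rightarrow> nat \<Rightarrow> 'a::cstar_algebra) \<Rightarrow> bool" where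
  "positive_matrix n M \<longleftrightarrow>
     (\<exists>B::nat \<Rightarrow> nat \<Rightarrow> 'a. \<forall>i<n. \<forall>j<n. M i j = (\<Sum>k<n. cstar (B k i) * B k j))"

definition cp_map :: "('a::cstar_algebra \<Rightarrow> 'h::chilbert \<Rightarrow> 'h) \<Rightarrow> bool" where
  "cp_map \<phi> \<longleftrightarrow>
     (\<forall>a b. \<phi> (a + b) = (\<lambda>h. \<phi> a h + \<phi> b h)) \<and>
     (\<forall>c a. \<phi> (c *\<^sub>C a) = (\<lambda>h. c *\<^sub>C \<phi> a h)) \<and>
     (\<forall>a. bounded_op (\<phi> a)) \<and>
     (\<forall>n M. positive_matrix n M \<longrightarrow> positive_opmatrix n (\<lambda>i j. \<phi> (M i j)))"

definition countably_additive_cfun :: "'x measure \<Rightarrow> ('x set \<Rightarrow> complex) \<Rightarrow> bool" where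
  "countably_additive_cfun M \<mu> \<longleftrightarrow>
     (\<forall>F::nat \<Rightarrow> 'x set. range F \<subseteq> sets M \<longrightarrow> disjoint_family F \<longrightarrow>
        (\<lambda>n. \<mu> (F n)) sums \<mu> (\<Union>n. F n))"

definition cp_instrument ::
  "'x measure \<Rightarrow> ('x set \<Rightarrow> 'a::cstar_algebra \<Rightarrow> 'h::chilbert \<Rightarrow> 'h) \<Rightarrow> bool" where
  "cp_instrument M I \<longleftrightarrow>
     (\<forall>A\<in>sets M. cp_map (I A)) \<and>
     (\<forall>a h k. countably_additive_cfun M (\<lambda>A. cinner h (I A a k)))"

definition spectral_measure :: "'x measure \<Rightarrow> ('x set \<Rightarrow> 'k::chilbert \<Rightarrow> 'k) \<Rightarrow> bool" where
  "spectral_measure M E \<longleftrightarrow>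
     (\<forall>A\<in>sets M. bounded_op (E A) \<and> E A \<circ> E A = E A \<and> is_adjoint (E A) (E A)) \<and>
     E {} = (\<lambda>_. 0) \<and> E (space M) = id \<and>
     (\<forall>A\<in>sets M. \<forall>B\<in>sets M. E (A \<inter> B) = E A \<circ> E B) \<and>
     (\<forall>h k. countably_additive_cfun M (\<lambda>A. cinner h (E A k)))"

definition unital_star_hom :: "('a::cstar_algebra \<Rightarrow> 'k::chilbert \<Rightarrow> 'k) \<Rightarrow> bool" where
  "unital_star_hom \<pi> \<longleftrightarrow>
     (\<forall>a. bounded_op (\<pi> a)) \<and>
     (\<forall>a b. \<pi> (a + b) = (\<lambda>h. \<pi> a h + \<pi> b h)) \<and>
     (\<forall>c a. \<pi> (c *\<^sub>C a) = (\<lambda>h. c *\<^sub>C \<pi> a h)) \<and>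
     (\<forall>a b. \<pi> (a * b) = \<pi> a \<circ> \<pi> b) \<and>
     \<pi> 1 = id \<and>
     (\<forall>a. is_adjoint (\<pi> a) (\<pi> (cstar a)))"

definition cspan :: "'a::cvec set \<Rightarrow> 'a set" where
  "cspan S = {x. \<exists>F c. finite F \<and> F \<subseteq> S \<and> x = (\<Sum>v\<in>F. c v *\<^sub>C v)}"

definition dense_in_space :: "'k::chilbert set \<Rightarrow> bool" where
  "dense_in_space S \<longleftrightarrow> (\<forall>k. \<forall>e>0. \<exists>v\<in>S. hnorm (k - v) < e)"

definition spectral_instrument ::
  "('a \<Rightarrow> 'k \<Rightarrow> 'k) \<Rightarrow> ('x set \<Rightarrow> 'k \<Rightarrow> 'k) \<Rightarrow> 'x set \<Rightarrow> 'a \<Rightarrow> 'k \<Rightarrow> 'k" where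
  "spectral_instrument \<pi> E = (\<lambda>A a. \<pi> a \<circ> E A)"

text \<open>Minimal bi-dilation \<open>(K,\<pi>,E,V)\<close> of \<open>I\<close>; \<open>K\<close> is the type \<open>'k\<close>.\<close>
definition minimal_bidilation ::
  "'x measure \<Rightarrow> ('x set \<Rightarrow> 'a::cstar_algebra \<Rightarrow> 'h::chilbert \<Rightarrow> 'h) \<Rightarrow>
   ('a \<Rightarrow> 'k::chilbert \<Rightarrow> 'k) \<Rightarrow> ('x set \<Rightarrow> 'k \<Rightarrow> 'k) \<Rightarrow> ('h \<Rightarrow> 'k) \<Rightarrow> bool" where
  "minimal_bidilation M I \<pi> E V \<longleftrightarrow>
     unital_star_hom \<pi> \<and> spectral_measure M E \<and>
     (\<forall>a. \<forall>A\<in>sets M. \<pi> a \<circ> E A = E A \<circ> \<pi> a) \<and>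
     bounded_op V \<and>
     (\<exists>Vs. is_adjoint V Vs \<and> (\<forall>A\<in>sets M. \<forall>a. I A a = Vs \<circ> \<pi> a \<circ> E A \<circ> V)) \<and>
     dense_in_space (cspan {\<pi> a (E A (V h)) |a A h. A \<in> sets M})"

definition zero_map :: "'a \<Rightarrow> 'h::zero \<Rightarrow> 'h" where
  "zero_map = (\<lambda>_ _. 0)"

definition is_atom :: "'x measure \<Rightarrow> ('x set \<Rightarrow> 'a \<Rightarrow> 'h::zero \<Rightarrow> 'h) \<Rightarrow> 'x set \<Rightarrow> bool" where
  "is_atom M J A \<longleftrightarrow> A \<in> sets M \<and> J A \<noteq> zero_map \<and>
     (\<forall>B\<in>sets M. B \<subseteq> A \<longrightarrow> J B = zero_map \<or> J B = J A)"

definition atomic_instr :: "'x measure \<Rightarrow> ('x set \<Rightarrow> 'a \<Rightarrow> 'h::zero \<Rightarrow> 'h) \<Rightarrow> bool" where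
  "atomic_instr M J \<longleftrightarrow>
     (\<forall>A\<in>sets M. J A \<noteq> zero_map \<longrightarrow> (\<exists>B. B \<subseteq> A \<and> is_atom M J B))"

definition nonatomic_instr :: "'x measure \<Rightarrow> ('x set \<Rightarrow> 'a \<Rightarrow> 'h::zero \<Rightarrow> 'h) \<Rightarrow> bool" where
  "nonatomic_instr M J \<longleftrightarrow> \<not> (\<exists>A. is_atom M J A)"

end

theory Submission
  imports Defs
begin

lemma cinner_zero_right: "cinner x (0::'a::chilbert) = 0"
  using cinner_add_right[of x 0 0] by simp

lemma cinner_zero_left: "cinner (0::'a::chilbert) x = 0"
  using cinner_conj[of 0 x] by (simp add: cinner_zero_right)

lemma cinner_diff_right: "cinner x (y - z) = cinner x y - cinner x (z::'a::chilbert)"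
  using cinner_add_right[of x "y - z" z] by simp

lemma cinner_add_left: "cinner (x + y) z = cinner x z + cinner y (z::'a::chilbert)"
  by (metis cinner_conj cinner_add_right complex_cnj_add)

lemma cinner_diff_left: "cinner (x - y) z = cinner x z - cinner y (z::'a::chilbert)"
  by (metis cinner_conj cinner_diff_right complex_cnj_diff)

lemma hnorm_nonneg: "0 \<le> hnorm x"
  unfolding hnorm_def using cinner_nonneg by simp

lemma hnorm_zero: "hnorm (x::'a::chilbert) = 0 \<Longrightarrow> x = 0"
proof -
  assume "hnorm x = 0"
  then have r: "Re (cinner x x) = 0" unfolding hnorm_def using cinner_nonneg[of x] by simp
  have "Im (cinner x x) = 0"
    using cinner_conj[of x x] by (metis Im_complex_of_real Reals_cnj_iff complex_is_Real_iff)
  with r have "cinner x x = 0" by (simp add: complex_eq_iff)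
  then show ?thesis using cinner_eq_zero by blast
qed

lemma clinear_zero: "clinear_map T \<Longrightarrow> T 0 = 0"
  unfolding clinear_map_def by (metis add.right_neutral add_left_cancel)

lemma clinear_diff: "clinear_map T \<Longrightarrow> T (x - y) = T x - T y"
  unfolding clinear_map_def by (metis diff_add_cancel eq_diff_eq)

lemma cscale_zero: "c *\<^sub>C (0::'a::cvec) = 0"
  using cscale_add_right[of c 0 0] by simp

lemma cscale_diff: "c *\<^sub>C ((x::'a::cvec) - y) = c *\<^sub>C x - c *\<^sub>C y"
  using cscale_add_right[of c "x - y" y] by (simp add: eq_diff_eq)

lemma clinear_sum: assumes "clinear_map T" "finite F" shows "T (\<Sum>v\<in>F. f v) = (\<Sum>v\<in>F. T (f v))"
using assms(2) proof (induction F rule: finite_induct)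
  case empty then show ?case using clinear_zero assms(1) by simp
next
  case (insert x F)
  then show ?case using assms(1) unfolding clinear_map_def by simp
qed

lemma span_zero:
  assumes "clinear_map T" "\<forall>v\<in>S. T v = 0" "x \<in> cspan S"
  shows "T x = 0"
proof -
  obtain F c where F: "finite F" "F \<subseteq> S" "x = (\<Sum>v\<in>F. c v *\<^sub>C v)"
    using assms(3) unfolding cspan_def by blast
  have "T x = (\<Sum>v\<in>F. T (c v *\<^sub>C v))" using F clinear_sum[OF assms(1)] by simp
  also have "\<dots> = (\<Sum>v\<in>F. c v *\<^sub>C T v)" using assms(1) unfolding clinear_map_def by simp
  also have "\<dots> = 0" using F assms(2) by (simp add: subset_iff cscale_zero)
  finally show ?thesis .
qed

lemma dense_zero:
  assumes "bounded_op T" "dense_in_space S" "\<forall>v\<in>S. T v = 0"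
  shows "T x = 0"
proof (rule ccontr)
  assume nz: "T x \<noteq> 0"
  define n where "n = hnorm (T x)"
  have npos: "n > 0" using nz hnorm_zero hnorm_nonneg unfolding n_def
    by (metis less_eq_real_def)
  have lin: "clinear_map T" using assms(1) unfolding bounded_op_def by blast
  obtain C where C: "\<forall>x. hnorm (T x) \<le> C * hnorm x" using assms(1) unfolding bounded_op_def by blast
  define e where "e = n / (\<bar>C\<bar> + 1)"
  have epos: "e > 0" using npos unfolding e_def by simp
  obtain v where v: "v \<in> S" "hnorm (x - v) < e" using assms(2) epos unfolding dense_in_space_def by blast
  have "T (x - v) = T x" using clinear_diff[OF lin] assms(3) v(1) by simp
  then have "n \<le> C * hnorm (x - v)" using C unfolding n_def by metis
  also have "\<dots> \<le> \<bar>C\<bar> * hnorm (x - v)" using hnorm_nonneg[of "x - v"]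
    by (metis abs_ge_self mult_right_mono)
  also have "\<dots> \<le> \<bar>C\<bar> * e" using v(2) by (simp add: mult_left_mono)
  also have "\<dots> < n" unfolding e_def using npos
    by (simp add: divide_simps)
  finally show False by simp
qed

lemma key:
  assumes mb: "minimal_bidilation M I \<pi> E V"
    and A: "A \<in> sets M" and B: "B \<in> sets M" and BA: "B \<subseteq> A"
    and eq: "\<forall>k. cinner (V k) (E A (V k)) = cinner (V k) (E B (V k))"
  shows "E A = E B"
proof -
  have hom: "unital_star_hom \<pi>" and sm: "spectral_measure M E"
    and comm: "\<forall>a. \<forall>C\<in>sets M. \<pi> a \<circ> E C = E C \<circ> \<pi> a"
    and dense: "dense_in_space (cspan {\<pi> a (E C (V h)) |a C h. C \<in> sets M})"
    using mb unfolding minimal_bidilation_def by blast+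
  have bA: "bounded_op (E A)" and idA: "E A \<circ> E A = E A" and adjA: "is_adjoint (E A) (E A)"
    using sm A unfolding spectral_measure_def by blast+
  have bB: "bounded_op (E B)" and idB: "E B \<circ> E B = E B" and adjB: "is_adjoint (E B) (E B)"
    using sm B unfolding spectral_measure_def by blast+
  have Eint: "\<And>C D. C \<in> sets M \<Longrightarrow> D \<in> sets M \<Longrightarrow> E (C \<inter> D) = E C \<circ> E D"
    using sm unfolding spectral_measure_def by blast
  have AB: "\<And>x. E A (E B x) = E B x" using Eint[OF A B] BA by (metis Int_absorb1 comp_apply)
  have BA': "\<And>x. E B (E A x) = E B x" using Eint[OF B A] BA by (metis Int_absorb2 comp_apply)
  have AA: "\<And>x. E A (E A x) = E A x" using idA by (metis comp_apply)
  have BB: "\<And>x. E B (E B x) = E B x" using idB by (metis comp_apply)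
  have linA: "clinear_map (E A)" using bA unfolding bounded_op_def by blast
  have linB: "clinear_map (E B)" using bB unfolding bounded_op_def by blast
  have pilin: "\<And>a. clinear_map (\<pi> a)" using hom unfolding unital_star_hom_def bounded_op_def by blast
  define D where "D = (\<lambda>x. E A x - E B x)"
  have linD: "clinear_map D"
    using linA linB unfolding clinear_map_def D_def by (simp add: cscale_diff algebra_simps)
  have EB_D: "\<And>x. E B (D x) = 0" unfolding D_def using clinear_diff[OF linB] BA' BB by simp
  have EA_D: "\<And>x. E A (D x) = D x" unfolding D_def using clinear_diff[OF linA] AB AA by simp
  have pyth: "hnorm (D x) \<le> hnorm (E A x)" for x
  proof -
    have s: "E A x = D x + E B x" unfolding D_def by simp
    have c1: "cinner (D x) (E B x) = 0" using adjB EB_D cinner_zero_left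
      unfolding is_adjoint_def by metis
    have c2: "cinner (E B x) (D x) = 0" using adjB EB_D cinner_zero_right
      unfolding is_adjoint_def by metis
    have "cinner (E A x) (E A x) = cinner (D x) (D x) + cinner (E B x) (E B x)"
      unfolding s by (simp add: cinner_add_left cinner_add_right c1 c2)
    then have "Re (cinner (D x) (D x)) \<le> Re (cinner (E A x) (E A x))"
      using cinner_nonneg[of "E B x"] by simp
    then show ?thesis unfolding hnorm_def by simp
  qed
  have bD: "bounded_op D"
  proof -
    obtain C where "\<forall>x. hnorm (E A x) \<le> C * hnorm x" using bA unfolding bounded_op_def by blast
    then have "\<forall>x. hnorm (D x) \<le> C * hnorm x" using pyth order_trans by blast
    then show ?thesis using linD unfolding bounded_op_def by blast
  qed
  have DV: "D (V k) = 0" for k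
  proof -
    let ?w = "V k"
    have "cinner (D ?w) (D ?w) = cinner (E A ?w) (D ?w) - cinner (E B ?w) (D ?w)"
      unfolding D_def by (simp add: cinner_diff_left)
    also have "\<dots> = cinner ?w (E A (D ?w)) - cinner ?w (E B (D ?w))"
      using adjA adjB unfolding is_adjoint_def by simp
    also have "\<dots> = cinner ?w (D ?w)" using EA_D EB_D cinner_zero_right by simp
    also have "\<dots> = 0" unfolding D_def cinner_diff_right using eq by simp
    finally show ?thesis using cinner_eq_zero by blast
  qed
  have gen: "D (\<pi> a (E C (V h))) = 0" if C: "C \<in> sets M" for a C h
  proof -
    have c1: "\<And>z. E A (\<pi> a z) = \<pi> a (E A z)" "\<And>z. E B (\<pi> a z) = \<pi> a (E B z)"
      using comm A B by (metis comp_apply)+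
    have c2: "\<And>y. E A (E C y) = E C (E A y)" "\<And>y. E B (E C y) = E C (E B y)"
      using Eint[OF A C] Eint[OF C A] Eint[OF B C] Eint[OF C B]
      by (metis Int_commute comp_apply)+
    have linC: "clinear_map (E C)" using sm C unfolding spectral_measure_def bounded_op_def by blast
    have "D (\<pi> a (E C (V h))) = \<pi> a (E C (D (V h)))"
      unfolding D_def c1 c2
      by (simp add: clinear_diff[OF pilin] clinear_diff[OF linC])
    then show ?thesis using DV clinear_zero[OF linC] clinear_zero[OF pilin] by simp
  qed
  have gen': "\<forall>v\<in>{\<pi> a (E C (V h)) |a C h. C \<in> sets M}. D v = 0" using gen by blast
  have sp: "\<forall>v\<in>cspan {\<pi> a (E C (V h)) |a C h. C \<in> sets M}. D v = 0"
    using span_zero[OF linD gen'] by blast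
  have "D x = 0" for x
    using dense_zero[OF bD dense sp] .
  then show ?thesis unfolding D_def by (auto simp: fun_eq_iff)
qed

theorem proposition2p34:
  fixes M :: "'x measure"
    and I :: "'x set \<Rightarrow> 'a::cstar_algebra \<Rightarrow> 'h::chilbert \<Rightarrow> 'h"
    and \<pi> :: "'a \<Rightarrow> 'k::chilbert \<Rightarrow> 'k"
    and E :: "'x set \<Rightarrow> 'k \<Rightarrow> 'k"
    and V :: "'h \<Rightarrow> 'k"
  assumes "cp_instrument M I"
    and "minimal_bidilation M I \<pi> E V"
  shows "(\<forall>A. is_atom M I A \<longleftrightarrow> is_atom M (spectral_instrument \<pi> E) A)
    \<and> (atomic_instr M I \<longleftrightarrow> atomic_instr M (spectral_instrument \<pi> E))
    \<and> (nonatomic_instr M I \<longleftrightarrow> nonatomic_instr M (spectral_instrument \<pi> E))"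
proof -
  define J where "J = spectral_instrument \<pi> E"
  note mb = assms(2)
  have hom: "unital_star_hom \<pi>" and sm: "spectral_measure M E"
    using mb unfolding minimal_bidilation_def by blast+
  obtain Vs where adjV: "is_adjoint V Vs" and IF: "\<forall>A\<in>sets M. \<forall>a. I A a = Vs \<circ> \<pi> a \<circ> E A \<circ> V"
    using mb unfolding minimal_bidilation_def by blast
  have pi1: "\<pi> 1 = id" using hom unfolding unital_star_hom_def by blast
  have pi0: "\<And>a. \<pi> a 0 = 0" using hom clinear_zero unfolding unital_star_hom_def bounded_op_def by blast
  have E0: "E {} = (\<lambda>_. 0)" using sm unfolding spectral_measure_def by blast
  have Vs0: "Vs 0 = 0"
  proof -
    have "cinner (Vs 0) (Vs 0) = 0" using adjV cinner_zero_left unfolding is_adjoint_def by metis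
    then show ?thesis using cinner_eq_zero by blast
  qed
  have Iinner: "cinner k (I A 1 k) = cinner (V k) (E A (V k))" if "A \<in> sets M" for A k
  proof -
    have "I A 1 k = Vs (E A (V k))" using IF that pi1 by simp
    then show ?thesis using adjV cinner_conj unfolding is_adjoint_def by metis
  qed
  have eqIE: "I B = I A \<longleftrightarrow> E B = E A" if A: "A \<in> sets M" and B: "B \<in> sets M" and BA: "B \<subseteq> A" for A B
  proof
    assume "I B = I A"
    then have "\<forall>k. cinner (V k) (E A (V k)) = cinner (V k) (E B (V k))"
      using Iinner[OF A] Iinner[OF B] by metis
    then show "E B = E A" using key[OF mb A B BA] by simp
  next
    assume "E B = E A"
    then show "I B = I A" using IF A B by (auto simp: fun_eq_iff)
  qed
  have I0: "I {} = zero_map" using IF E0 Vs0 pi0 by (auto simp: fun_eq_iff zero_map_def)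
  have zI: "I A = zero_map \<longleftrightarrow> E A = (\<lambda>_. 0)" if A: "A \<in> sets M" for A
  proof -
    have "I A = zero_map \<longleftrightarrow> I {} = I A" using I0 by metis
    also have "\<dots> \<longleftrightarrow> E {} = E A" using eqIE[OF A sets.empty_sets] by blast
    finally show ?thesis using E0 by metis
  qed
  have eqJE: "J B = J A \<longleftrightarrow> E B = E A" for A B
  proof
    assume "J B = J A"
    then have "J B 1 = J A 1" by simp
    then show "E B = E A" unfolding J_def spectral_instrument_def pi1 by simp
  qed (simp add: J_def spectral_instrument_def)
  have zJ: "J A = zero_map \<longleftrightarrow> E A = (\<lambda>_. 0)" for A
  proof
    assume "J A = zero_map"
    then have "J A (1::'a) = zero_map (1::'a)" by simp
    then show "E A = (\<lambda>_. 0)" unfolding J_def spectral_instrument_def pi1 zero_map_def by simp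
  qed (simp add: J_def spectral_instrument_def zero_map_def fun_eq_iff pi0)
  have atom: "is_atom M I A \<longleftrightarrow> is_atom M J A" for A
  proof (cases "A \<in> sets M")
    case True
    have "(\<forall>B\<in>sets M. B \<subseteq> A \<longrightarrow> I B = zero_map \<or> I B = I A) \<longleftrightarrow>
          (\<forall>B\<in>sets M. B \<subseteq> A \<longrightarrow> J B = zero_map \<or> J B = J A)"
      using zI zJ eqIE[OF True] eqJE by simp
    then show ?thesis unfolding is_atom_def using zI[OF True] zJ by simp
  next
    case False then show ?thesis unfolding is_atom_def by simp
  qed
  have "atomic_instr M I \<longleftrightarrow> atomic_instr M J"
    unfolding atomic_instr_def using atom zI zJ by simp
  moreover have "nonatomic_instr M I \<longleftrightarrow> nonatomic_instr M J"
    unfolding nonatomic_instr_def using atom by simp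
  ultimately show ?thesis using atom unfolding J_def by simp
qed

end
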